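(* Let $k$ be a positive integer and let $G$ be a $2k$-connected $(P_2\cup kP_1)$-free graph. Let $u,v$ be distinct vertices of $G$, let $P$ be a longest $(u,v)$-path in $G$, oriented from $u$ to $v$, and suppose $V(P)\neq V(G)$. Let $x\in V(G)\setminus V(P)$ and write $N_P(x)=\{x_1,\dots,x_t\}$ in the order of appearance on $P$ from $u$ to $v$. For $i\in\{1,\dots,t-1\}$ let $S_i$ be the set of vertices of $P$ strictly between $x_i$ and $x_{i+1}$. Then for every $i\in\{1,\dots,t-1\}$ and every odd integer $j$ with $1\le j\le |S_i|$, the vertex $x_i^{+j}$ has no neighbor in $N_P(x)^+$.
   Context: All graphs are finite and simple. For a graph $H$, a graph $G$ is $H$-free if $G$ contains no induced subgraph isomorphic to $H$; $P_2\cup kP_1$ is the disjoint union of an edge and $k$ isolated vertices. A $(u,v)$-path is a path with endpoints $u$ and $v$. $N_P(y)$ is the set of neighbors of $y$ lying on $P$. For a vertex $w$ of the oriented path $P$, $w^{+}$ is its successor on $P$ and $w^{+\ell}$ denotes the successor of $w^{+(\ell-1)}$. For $S\subseteq V(P)$, $S^+=\{w^+: w\in S\setminus\{v\}\}$. *)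

theory Defs
  imports Main
begin

definition simple_graph :: "'a set \<Rightarrow> ('a \<Rightarrow> 'a \<Rightarrow> bool) \<Rightarrow> bool" where
  "simple_graph V E \<longleftrightarrow> finite V \<and> (\<forall>x y. E x y \<longrightarrow> E y x) \<and> (\<forall>x. \<not> E x x)
     \<and> (\<forall>x y. E x y \<longrightarrow> x \<in> V \<and> y \<in> V)"

definition connected_on :: "'a set \<Rightarrow> ('a \<Rightarrow> 'a \<Rightarrow> bool) \<Rightarrow> bool" where
  "connected_on W E \<longleftrightarrow>
     (\<forall>x\<in>W. \<forall>y\<in>W. (\<lambda>a b. a \<in> W \<and> b \<in> W \<and> E a b)\<^sup>*\<^sup>* x y)"

definition k_connected :: "'a set \<Rightarrow> ('a \<Rightarrow> 'a \<Rightarrow> bool) \<Rightarrow> nat \<Rightarrow> bool" where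
  "k_connected V E k \<longleftrightarrow> card V > k \<and>
     (\<forall>S. S \<subseteq> V \<and> card S < k \<longrightarrow> connected_on (V - S) E)"

definition has_induced :: "'a set \<Rightarrow> ('a \<Rightarrow> 'a \<Rightarrow> bool) \<Rightarrow> nat \<Rightarrow> (nat \<Rightarrow> nat \<Rightarrow> bool) \<Rightarrow> bool" where
  "has_induced V E n HE \<longleftrightarrow> (\<exists>f. inj_on f {0..<n} \<and> f ` {0..<n} \<subseteq> V \<and>
     (\<forall>i\<in>{0..<n}. \<forall>j\<in>{0..<n}. E (f i) (f j) \<longleftrightarrow> HE i j))"

definition P2_kP1_adj :: "nat \<Rightarrow> nat \<Rightarrow> bool" where
  "P2_kP1_adj i j \<longleftrightarrow> {i, j} = {0, 1::nat}"

definition P2_kP1_free :: "'a set \<Rightarrow> ('a \<Rightarrow> 'a \<Rightarrow> bool) \<Rightarrow> nat \<Rightarrow> bool" where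
  "P2_kP1_free V E k \<longleftrightarrow> \<not> has_induced V E (k + 2) P2_kP1_adj"

definition is_path :: "'a set \<Rightarrow> ('a \<Rightarrow> 'a \<Rightarrow> bool) \<Rightarrow> 'a list \<Rightarrow> bool" where
  "is_path V E P \<longleftrightarrow> P \<noteq> [] \<and> distinct P \<and> set P \<subseteq> V \<and>
     (\<forall>i. Suc i < length P \<longrightarrow> E (P ! i) (P ! Suc i))"

definition is_uv_path :: "'a set \<Rightarrow> ('a \<Rightarrow> 'a \<Rightarrow> bool) \<Rightarrow> 'a \<Rightarrow> 'a \<Rightarrow> 'a list \<Rightarrow> bool" where
  "is_uv_path V E u v P \<longleftrightarrow> is_path V E P \<and> hd P = u \<and> last P = v"

definition longest_uv_path :: "'a set \<Rightarrow> ('a \<Rightarrow> 'a \<Rightarrow> bool) \<Rightarrow> 'a \<Rightarrow> 'a \<Rightarrow> 'a list \<Rightarrow> bool" where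
  "longest_uv_path V E u v P \<longleftrightarrow> is_uv_path V E u v P \<and>
     (\<forall>Q. is_uv_path V E u v Q \<longrightarrow> length Q \<le> length P)"

text \<open>N_P(x)^+: successors on P of the neighbours of x on P (the last vertex v has no
  successor and is excluded).\<close>
definition NP_plus :: "('a \<Rightarrow> 'a \<Rightarrow> bool) \<Rightarrow> 'a list \<Rightarrow> 'a \<Rightarrow> 'a set" where
  "NP_plus E P x = {P ! Suc c | c. Suc c < length P \<and> E x (P ! c)}"

end

theory Submission
  imports Defs "HOL-Library.Multiset"
begin


definition seg :: "nat \<Rightarrow> nat \<Rightarrow> 'a list \<Rightarrow> 'a list" where
  "seg i j xs = drop i (take j xs)"

lemma successively_nth:
  "successively R xs \<longleftrightarrow> (\<forall>i. Suc i < length xs \<longrightarrow> R (xs!i) (xs!Suc i))"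
proof (induction xs rule: induct_list012)
  case (3 x y xs)
  show ?case
  proof
    assume "successively R (x # y # xs)"
    then show "\<forall>i. Suc i < length (x # y # xs) \<longrightarrow> R ((x # y # xs) ! i) ((x # y # xs) ! Suc i)"
      using 3 by (auto simp: nth_Cons split: nat.splits)
  next
    assume h: "\<forall>i. Suc i < length (x # y # xs) \<longrightarrow> R ((x # y # xs) ! i) ((x # y # xs) ! Suc i)"
    have "R x y" using h[rule_format, of 0] by simp
    moreover have "successively R (y#xs)" unfolding 3
    proof (intro allI impI)
      fix i assume "Suc i < length (y#xs)"
      then show "R ((y # xs) ! i) ((y # xs) ! Suc i)" using h[rule_format, of "Suc i"] by simp
    qed
    ultimately show "successively R (x # y # xs)" by simp
  qed
qed auto

lemma is_path_alt:
  "is_path V E P \<longleftrightarrow> P \<noteq> [] \<and> distinct P \<and> set P \<subseteq> V \<and> successively E P"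
  unfolding is_path_def successively_nth by blast

lemma succ_take: "successively R xs \<Longrightarrow> successively R (take n xs)"
  by (metis append_take_drop_id successively_append_iff)
lemma succ_drop: "successively R xs \<Longrightarrow> successively R (drop n xs)"
  by (metis append_take_drop_id successively_append_iff)
lemma succ_seg: "successively R xs \<Longrightarrow> successively R (seg i j xs)"
  unfolding seg_def by (intro succ_drop succ_take)

lemma take_seg: "i \<le> j \<Longrightarrow> take j xs = take i xs @ seg i j xs"
  unfolding seg_def by (metis append_take_drop_id min.absorb1 take_take)
lemma seg_split: "i \<le> j \<Longrightarrow> j \<le> l \<Longrightarrow> seg i l xs = seg i j xs @ seg j l xs"
proof -
  assume a: "i \<le> j" "j \<le> l"
  have t: "take l xs = take j xs @ seg j l xs" using take_seg[OF a(2)] .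
  show ?thesis
  proof (cases "j \<le> length xs")
    case True
    then have "length (take j xs) = j" by simp
    then show ?thesis unfolding seg_def[of i l] t using a by (simp add: seg_def)
  next
    case False
    then have "seg j l xs = []" unfolding seg_def by simp
    moreover have "seg i l xs = seg i j xs" unfolding seg_def using False a by (simp add: min_def)
    ultimately show ?thesis by simp
  qed
qed

lemma hd_seg: "i < j \<Longrightarrow> j \<le> length xs \<Longrightarrow> hd (seg i j xs) = xs ! i"
  unfolding seg_def by (simp add: hd_drop_conv_nth)
lemma last_seg: "i < j \<Longrightarrow> j \<le> length xs \<Longrightarrow> last (seg i j xs) = xs ! (j - 1)"
  unfolding seg_def by (simp add: last_conv_nth)
lemma seg_ne: "i < j \<Longrightarrow> j \<le> length xs \<Longrightarrow> seg i j xs \<noteq> []"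
  unfolding seg_def by simp
lemma last_take_Suc: "n < length xs \<Longrightarrow> last (take (Suc n) xs) = xs ! n"
  by (simp add: take_Suc_conv_app_nth)
lemma hd_take_Suc: "xs \<noteq> [] \<Longrightarrow> hd (take (Suc n) xs) = hd xs"
  by (cases xs) auto
lemma last_drop': "n < length xs \<Longrightarrow> last (drop n xs) = last xs"
  by simp

lemma longer_contra:
  assumes lp: "longest_uv_path V E u v P"
    and Q: "Q \<noteq> []" "distinct Q" "set Q \<subseteq> V" "set Q \<inter> set P = {}"
    and L: "mset L = mset P + mset Q" "successively E L" "hd L = u" "last L = v"
  shows False
proof -
  have P: "is_path V E P" "hd P = u" "last P = v" using lp unfolding longest_uv_path_def is_uv_path_def by auto
  have m: "mset L = mset (P @ Q)" using L by simp
  have "distinct (P @ Q)" using P Q by (auto simp: is_path_alt)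
  hence d: "distinct L" using mset_eq_imp_distinct_iff[OF m] by simp
  have s: "set L = set P \<union> set Q" using mset_eq_setD[OF m] by simp
  have len: "length L = length P + length Q" using mset_eq_length[OF m] by simp
  hence "L \<noteq> []" using Q by auto
  hence "is_uv_path V E u v L" using d s L P Q unfolding is_uv_path_def is_path_alt by auto
  hence "length L \<le> length P" using lp unfolding longest_uv_path_def by blast
  thus False using len Q by simp
qed

lemma sg_sym: "simple_graph V E \<Longrightarrow> E a b \<Longrightarrow> E b a"
  unfolding simple_graph_def by blast

lemma succ_flip:
  assumes "simple_graph V E" "successively E xs"
  shows "successively (\<lambda>x y. E y x) xs"
  using assms(2)
proof (rule successively_mono)
  fix a b assume "E a b" then show "E b a" by (rule sg_sym[OF assms(1)])
qed

lemma lp_facts: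
  assumes "longest_uv_path V E u v P"
  shows "P \<noteq> []" "distinct P" "set P \<subseteq> V" "successively E P" "hd P = u" "last P = v"
  using assms unfolding longest_uv_path_def is_uv_path_def is_path_alt by auto

lemma ins_path:
  assumes sg: "simple_graph V E" and lp: "longest_uv_path V E u v P"
    and Q: "Q \<noteq> []" "distinct Q" "set Q \<subseteq> V" "set Q \<inter> set P = {}" "successively E Q"
    and a: "Suc a < length P" "E (P!a) (hd Q)" "E (last Q) (P!Suc a)"
  shows False
proof -
  note f = lp_facts[OF lp]
  let ?L = "take (Suc a) P @ Q @ drop (Suc a) P"
  show False
  proof (rule longer_contra[OF lp Q(1-4)])
    have "mset P = mset (take (Suc a) P) + mset (drop (Suc a) P)" by (metis append_take_drop_id mset_append)
    then show "mset ?L = mset P + mset Q" by (simp add: ac_simps)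
    have j1: "E (last (take (Suc a) P)) (hd Q)" using a by (simp add: last_take_Suc)
    have j2: "E (last Q) (hd (drop (Suc a) P))" using a by (simp add: hd_drop_conv_nth)
    have tk: "take (Suc a) P \<noteq> []" "drop (Suc a) P \<noteq> []" using f a by auto
    show "successively E ?L"
      using j1 j2 tk Q succ_take[OF f(4)] succ_drop[OF f(4)]
      by (simp add: successively_append_iff)
    show "hd ?L = u" using f by (simp add: hd_take_Suc)
    show "last ?L = v" using f a by simp
  qed
qed

lemma cross_path:
  assumes sg: "simple_graph V E" and lp: "longest_uv_path V E u v P"
    and Q: "Q \<noteq> []" "distinct Q" "set Q \<subseteq> V" "set Q \<inter> set P = {}" "successively E Q"
    and a: "a < b" "Suc b < length P" "E (P!a) (hd Q)" "E (last Q) (P!b)" "E (P!Suc a) (P!Suc b)"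
  shows False
proof -
  note f = lp_facts[OF lp]
  let ?S = "seg (Suc a) (Suc b) P"
  let ?L = "take (Suc a) P @ Q @ rev ?S @ drop (Suc b) P"
  have ne: "?S \<noteq> []" using a seg_ne[of "Suc a" "Suc b" P] by simp
  have hS: "hd ?S = P!Suc a" "last ?S = P!b" using a hd_seg[of "Suc a" "Suc b" P] last_seg[of "Suc a" "Suc b" P] by auto
  have sS: "successively (\<lambda>x y. E y x) ?S"
    by (rule succ_flip[OF sg succ_seg[OF f(4)]])
  show False
  proof (rule longer_contra[OF lp Q(1-4)])
    have t1: "take (Suc b) P = take (Suc a) P @ ?S" using a by (intro take_seg) simp
    have "P = take (Suc b) P @ drop (Suc b) P" by simp
    also have "\<dots> = take (Suc a) P @ ?S @ drop (Suc b) P" unfolding t1 by simp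
    finally have "mset P = mset (take (Suc a) P @ ?S @ drop (Suc b) P)" by (rule arg_cong)
    then show "mset ?L = mset P + mset Q" by simp
    have j1: "E (last (take (Suc a) P)) (hd Q)" using a by (simp add: last_take_Suc)
    have j2: "E (last Q) (hd (rev ?S))" using a hS ne by (simp add: hd_rev)
    have j3: "E (last (rev ?S)) (hd (drop (Suc b) P))" using a hS ne by (simp add: hd_drop_conv_nth last_rev)
    have tk: "take (Suc a) P \<noteq> []" "drop (Suc b) P \<noteq> []" using f a by auto
    show "successively E ?L"
      using j1 j2 j3 tk ne Q sS succ_take[OF f(4)] succ_drop[OF f(4)]
      by (simp add: successively_append_iff)
    show "hd ?L = u" using f by (simp add: hd_take_Suc)
    show "last ?L = v" using f a by simp
  qed
qed



lemma free_use:
  assumes fr: "P2_kP1_free V E k" and sg: "simple_graph V E"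
    and e: "E a b" and S: "S \<subseteq> V" "finite S" "k \<le> card S" "a \<notin> S" "b \<notin> S"
    and ind: "\<forall>s\<in>S. \<forall>t\<in>S. \<not> E s t" and na: "\<forall>s\<in>S. \<not> E a s \<and> \<not> E b s"
  shows False
proof -
  obtain T where T: "T \<subseteq> S" "card T = k" "finite T" using obtain_subset_with_card_n[OF S(3)] by blast
  obtain h where h: "bij_betw h {0..<k} T" using ex_bij_betw_nat_finite[OF T(3)] T(2) by auto
  define f where "f i = (if i = 0 then a else if i = 1 then b else h (i - 2))" for i
  have hT: "i - 2 < k \<Longrightarrow> h (i - 2) \<in> T" for i using h by (auto simp: bij_betw_def)
  have hinj: "inj_on h {0..<k}" using h by (auto simp: bij_betw_def)
  have ab: "a \<noteq> b" using e sg unfolding simple_graph_def by auto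
  have abV: "a \<in> V" "b \<in> V" using e sg unfolding simple_graph_def by auto
  have fS: "l \<ge> 2 \<Longrightarrow> l < k + 2 \<Longrightarrow> f l \<in> S" for l using hT[of l] T by (auto simp: f_def)
  have f01: "f 0 = a" "f 1 = b" by (auto simp: f_def)
  have "has_induced V E (k + 2) P2_kP1_adj"
    unfolding has_induced_def
  proof (intro exI conjI)
    show "inj_on f {0..<k + 2}"
    proof (rule inj_onI)
      fix i j assume ij: "i \<in> {0..<k+2}" "j \<in> {0..<k+2}" "f i = f j"
      show "i = j"
      proof (cases "i \<ge> 2")
        case True
        then have fi: "f i \<in> S" using fS[of i] ij(1) by auto
        show ?thesis
        proof (cases "j \<ge> 2")
          case True
          then have "h (i - 2) = h (j - 2)" using ij \<open>i \<ge> 2\<close> by (simp add: f_def)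
          then have "i - 2 = j - 2" using hinj ij True \<open>i \<ge> 2\<close> unfolding inj_on_def by auto
          then show ?thesis using True \<open>i \<ge> 2\<close> by simp
        next
          case False
          then have "j = 0 \<or> j = 1" by auto
          then show ?thesis using fi ij f01 S by auto
        qed
      next
        case False
        then have i01: "i = 0 \<or> i = 1" by auto
        show ?thesis
        proof (cases "j \<ge> 2")
          case True
          then have "f j \<in> S" using fS[of j] ij(2) by auto
          then show ?thesis using i01 ij f01 S by auto
        next
          case False
          then have "j = 0 \<or> j = 1" by auto
          then show ?thesis using i01 ij f01 ab by auto
        qed
      qed
    qed
    show "f ` {0..<k + 2} \<subseteq> V"
    proof
      fix y assume "y \<in> f ` {0..<k + 2}"
      then obtain l where l: "l < k + 2" "y = f l" by auto
      show "y \<in> V"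
      proof (cases "l \<ge> 2")
        case True then show ?thesis using fS l S by auto
      next
        case False then have "l = 0 \<or> l = 1" by auto
        then show ?thesis using l f01 abV by auto
      qed
    qed
    show "\<forall>i\<in>{0..<k + 2}. \<forall>j\<in>{0..<k + 2}. E (f i) (f j) = P2_kP1_adj i j"
    proof (intro ballI)
      fix i j assume ij: "i \<in> {0..<k+2}" "j \<in> {0..<k+2}"
      have Ein: "E s t \<Longrightarrow> E t s" for s t using sg_sym[OF sg] .
      have irr: "\<not> E s s" for s using sg unfolding simple_graph_def by auto
      have adj: "P2_kP1_adj i j \<longleftrightarrow> (i=0 \<and> j=1) \<or> (i=1 \<and> j=0)"
        unfolding P2_kP1_adj_def by (auto simp: doubleton_eq_iff)
      show "E (f i) (f j) = P2_kP1_adj i j"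
      proof (cases "i \<ge> 2")
        case True
        then have fi: "f i \<in> S" using fS ij by auto
        show ?thesis
        proof (cases "j \<ge> 2")
          case True
          then have "f j \<in> S" using fS ij by auto
          then show ?thesis using fi ind adj \<open>i \<ge> 2\<close> by auto
        next
          case False
          then have "j = 0 \<or> j = 1" by auto
          then show ?thesis using fi na adj Ein f01 \<open>i \<ge> 2\<close> by auto
        qed
      next
        case False
        then have i01: "i = 0 \<or> i = 1" by auto
        show ?thesis
        proof (cases "j \<ge> 2")
          case True
          then have "f j \<in> S" using fS ij by auto
          then show ?thesis using i01 na adj f01 True by auto
        next
          case False
          then have "j = 0 \<or> j = 1" by auto
          then show ?thesis using i01 adj f01 e Ein irr by auto
        qed
      qed
    qed
  qed
  thus False using fr unfolding P2_kP1_free_def by simp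
qed

lemma rtranclp_dpath:
  assumes "R\<^sup>*\<^sup>* a b" and W: "\<And>s t. R s t \<Longrightarrow> s \<in> W \<and> t \<in> W" and "a \<in> W"
  shows "\<exists>Q. Q \<noteq> [] \<and> distinct Q \<and> hd Q = a \<and> last Q = b \<and> successively R Q \<and> set Q \<subseteq> W"
  using assms(1)
proof (induction rule: rtranclp_induct)
  case base
  then show ?case using assms(3) by (intro exI[of _ "[a]"]) auto
next
  case (step b c)
  then obtain Q where Q: "Q \<noteq> []" "distinct Q" "hd Q = a" "last Q = b" "successively R Q" "set Q \<subseteq> W" by blast
  show ?case
  proof (cases "c \<in> set Q")
    case True
    then obtain i where i: "i < length Q" "Q ! i = c" by (auto simp: in_set_conv_nth)
    show ?thesis
      by (intro exI[of _ "take (Suc i) Q"])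
        (use Q i in \<open>auto simp: hd_take_Suc last_take_Suc succ_take dest: in_set_takeD\<close>)
  next
    case False
    have "R (last Q) c" using step Q by simp
    then show ?thesis using Q False W[OF \<open>R b c\<close>]
      by (intro exI[of _ "Q @ [c]"]) (auto simp: successively_append_iff)
  qed
qed



lemma left_cross:
  assumes sg: "simple_graph V E" and lp: "longest_uv_path V E u v P"
    and x: "x \<in> V" "x \<notin> set P"
    and c: "p < p'" "Suc p' \<le> q" "Suc q < length P" "E x (P!p)" "E x (P!p')"
      "E (P!Suc p) (P!q)" "E (P!Suc p') (P!Suc q)"
  shows False
proof -
  note f = lp_facts[OF lp]
  let ?S1 = "seg (Suc p) (Suc p') P"
  let ?S2 = "seg (Suc p') (Suc q) P"
  let ?L = "take (Suc p) P @ [x] @ rev ?S1 @ rev ?S2 @ drop (Suc q) P"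
  have ne: "?S1 \<noteq> []" "?S2 \<noteq> []" using c seg_ne[of "Suc p" "Suc p'" P] seg_ne[of "Suc q" "Suc p" P] seg_ne[of "Suc p'" "Suc q" P] by auto
  have hS: "hd ?S1 = P!Suc p" "last ?S1 = P!p'" "hd ?S2 = P!Suc p'" "last ?S2 = P!q"
    using c by (auto simp: hd_seg last_seg)
  have sS: "successively (\<lambda>x y. E y x) ?S1" "successively (\<lambda>x y. E y x) ?S2"
    by (rule succ_flip[OF sg succ_seg[OF f(4)]])+
  have xs: "E (P!p) x" "E x (P!p')" "E (P!q) (P!Suc p)" using sg_sym[OF sg c(4)] c(5) sg_sym[OF sg c(6)] by auto
  show False
  proof (rule longer_contra[OF lp, of "[x]"])
    have t1: "take (Suc q) P = take (Suc p) P @ seg (Suc p) (Suc q) P" using c by (intro take_seg) simp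
    have t2: "seg (Suc p) (Suc q) P = ?S1 @ ?S2" using c by (intro seg_split) auto
    have "P = take (Suc q) P @ drop (Suc q) P" by simp
    also have "\<dots> = take (Suc p) P @ ?S1 @ ?S2 @ drop (Suc q) P" unfolding t1 t2 by simp
    finally have "mset P = mset (take (Suc p) P @ ?S1 @ ?S2 @ drop (Suc q) P)" by (rule arg_cong)
    then show "mset ?L = mset P + mset [x]" by simp
    have j1: "E (last (take (Suc p) P)) x" using c xs by (simp add: last_take_Suc)
    have j2: "E x (hd (rev ?S1))" using hS ne xs by (simp add: hd_rev)
    have j3: "E (last (rev ?S1)) (hd (rev ?S2))" using hS ne c by (simp add: hd_rev last_rev)
    have j4: "E (last (rev ?S2)) (hd (drop (Suc q) P))" using c hS ne by (simp add: hd_drop_conv_nth last_rev)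
    have tk: "take (Suc p) P \<noteq> []" "drop (Suc q) P \<noteq> []" using f c by auto
    show "successively E ?L"
      using j1 j2 j3 j4 tk ne sS succ_take[OF f(4)] succ_drop[OF f(4)]
      by (simp add: successively_append_iff successively_Cons)
    show "hd ?L = u" using f by (simp add: hd_take_Suc)
    show "last ?L = v" using f c by simp
  qed (use x in auto)
qed



lemma right_cross:
  assumes sg: "simple_graph V E" and lp: "longest_uv_path V E u v P"
    and x: "x \<in> V" "x \<notin> set P"
    and c: "q < p" "p < p'" "Suc p' < length P" "E x (P!p)" "E x (P!p')"
      "E (P!q) (P!Suc p)" "E (P!Suc q) (P!Suc p')"
  shows False
proof -
  note f = lp_facts[OF lp]
  let ?S1 = "seg (Suc q) (Suc p) P"
  let ?S2 = "seg (Suc p) (Suc p') P"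
  let ?L = "take (Suc q) P @ ?S2 @ [x] @ rev ?S1 @ drop (Suc p') P"
  have ne: "?S1 \<noteq> []" "?S2 \<noteq> []" using c seg_ne[of "Suc p" "Suc p'" P] seg_ne[of "Suc q" "Suc p" P] seg_ne[of "Suc p'" "Suc q" P] by auto
  have hS: "hd ?S1 = P!Suc q" "last ?S1 = P!p" "hd ?S2 = P!Suc p" "last ?S2 = P!p'"
    using c by (auto simp: hd_seg last_seg)
  have sS: "successively (\<lambda>x y. E y x) ?S1"
    by (rule succ_flip[OF sg succ_seg[OF f(4)]])
  have xs: "E (P!p') x" "E x (P!p)" using sg_sym[OF sg c(5)] c(4) by auto
  show False
  proof (rule longer_contra[OF lp, of "[x]"])
    have t1: "take (Suc p') P = take (Suc q) P @ seg (Suc q) (Suc p') P" using c by (intro take_seg) simp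
    have t2: "seg (Suc q) (Suc p') P = ?S1 @ ?S2" using c by (intro seg_split) auto
    have "P = take (Suc p') P @ drop (Suc p') P" by simp
    also have "\<dots> = take (Suc q) P @ ?S1 @ ?S2 @ drop (Suc p') P" unfolding t1 t2 by simp
    finally have "mset P = mset (take (Suc q) P @ ?S1 @ ?S2 @ drop (Suc p') P)" by (rule arg_cong)
    then show "mset ?L = mset P + mset [x]" by simp
    have j1: "E (last (take (Suc q) P)) (hd ?S2)" using c hS by (simp add: last_take_Suc)
    have j2: "E (last (rev ?S1)) (hd (drop (Suc p') P))" using c hS ne by (simp add: hd_drop_conv_nth last_rev)
    have j3: "E x (hd (rev ?S1))" using hS ne xs by (simp add: hd_rev)
    have tk: "take (Suc q) P \<noteq> []" "drop (Suc p') P \<noteq> []" using f c by auto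
    show "successively E ?L"
      using j1 j2 j3 tk ne hS xs sS succ_take[OF f(4)] succ_drop[OF f(4)] succ_seg[OF f(4)]
      by (simp add: successively_append_iff successively_Cons)
    show "hd ?L = u" using f by (simp add: hd_take_Suc)
    show "last ?L = v" using f c by simp
  qed (use x in auto)
qed



lemma path_edge:
  assumes "longest_uv_path V E u v P" "Suc i < length P"
  shows "E (P!i) (P!Suc i)"
  using lp_facts(4)[OF assms(1)] assms(2) unfolding successively_nth by blast

lemma len2:
  assumes "longest_uv_path V E u v P" "u \<noteq> v"
  shows "2 \<le> length P"
proof -
  note f = lp_facts[OF assms(1)]
  have "length P \<noteq> 1" using f assms(2) by (cases P) auto
  moreover have "length P \<noteq> 0" using f by auto
  ultimately show ?thesis by linarith
qed

lemma card_pos_bound: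
  assumes "N \<subseteq> set P" "M = {p. Suc p < length P \<and> P!p \<in> N}"
  shows "card N \<le> card M + 1"
proof -
  have "N \<subseteq> (\<lambda>p. P!p) ` (insert (length P - 1) M)"
  proof
    fix z assume "z \<in> N"
    then obtain p where p: "p < length P" "P!p = z" using assms(1) by (metis in_mono in_set_conv_nth)
    show "z \<in> (\<lambda>p. P!p) ` (insert (length P - 1) M)"
    proof (cases "Suc p < length P")
      case True then show ?thesis using p \<open>z \<in> N\<close> assms(2) by auto
    next
      case False then have "p = length P - 1" using p by auto
      then show ?thesis using p by auto
    qed
  qed
  moreover have "finite M" unfolding assms(2) by (rule finite_subset[of _ "{..<length P}"]) auto
  ultimately have "card N \<le> card (insert (length P - 1) M)"
    by (meson card_image_le card_mono finite.insertI finite_imageI order_trans)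
  also have "\<dots> \<le> card M + 1" by (simp add: card_insert_le_m1)
  finally show ?thesis .
qed

lemma no_off_nbr:
  assumes sg: "simple_graph V E" and lp: "longest_uv_path V E u v P" and uv: "u \<noteq> v"
    and fr: "P2_kP1_free V E k" and kc: "k_connected V E (2*k)" and k1: "k \<ge> 1"
    and x: "x \<in> V - set P" and xy: "E x y" and y: "y \<notin> set P"
  shows False
proof -
  note f = lp_facts[OF lp]
  have Esym: "E s t \<Longrightarrow> E t s" for s t using sg_sym[OF sg] .
  have EV: "E s t \<Longrightarrow> s \<in> V \<and> t \<in> V" for s t using sg unfolding simple_graph_def by blast
  define W where "W = V - set P"
  define R where "R s t \<longleftrightarrow> s \<in> W \<and> t \<in> W \<and> E s t" for s t
  define H where "H = {h. R\<^sup>*\<^sup>* x h}"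
  have xW: "x \<in> W" using x W_def by auto
  have RW: "R s t \<Longrightarrow> s \<in> W \<and> t \<in> W" for s t unfolding R_def by auto
  have hW: "h \<in> H \<Longrightarrow> h \<in> W" for h
  proof -
    assume "h \<in> H" then have "R\<^sup>*\<^sup>* x h" unfolding H_def by simp
    then show "h \<in> W" by (induction rule: rtranclp_induct) (use xW RW in auto)
  qed
  have symR: "symp R"
  proof (rule sympI)
    fix s t assume "R s t" then show "R t s" unfolding R_def using sg_sym[OF sg, of s t] by auto
  qed
  have Hpath: "\<exists>Q. Q \<noteq> [] \<and> distinct Q \<and> hd Q = h1 \<and> last Q = h2 \<and> successively E Q
      \<and> set Q \<subseteq> V \<and> set Q \<inter> set P = {}" if "h1 \<in> H" "h2 \<in> H" for h1 h2
  proof -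
    have "R\<^sup>*\<^sup>* h1 x" by (rule sympD[OF symp_rtranclp[OF symR]]) (use that(1) H_def in simp)
    then have "R\<^sup>*\<^sup>* h1 h2" by (rule rtranclp_trans) (use that(2) H_def in simp)
    from rtranclp_dpath[of R h1 h2 W, OF this RW hW[OF that(1)]]
    obtain Q where Q: "Q \<noteq> []" "distinct Q" "hd Q = h1" "last Q = h2" "successively R Q" "set Q \<subseteq> W"
      by blast
    have "successively E Q" using Q(5) by (rule successively_mono) (simp add: R_def)
    then show ?thesis using Q W_def by (intro exI[of _ Q]) auto
  qed
  have yH: "y \<in> H" unfolding H_def using xW xy y EV W_def by (auto simp: R_def)
  have xH: "x \<in> H" unfolding H_def by simp
  define Z where "Z = {z \<in> set P. \<exists>h\<in>H. E h z}"
  define Zpos where "Zpos = {p. Suc p < length P \<and> P!p \<in> Z}"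
  define Zp where "Zp = (\<lambda>p. P!Suc p) ` Zpos"
  have ins: False if as: "Suc a < length P" "h1 \<in> H" "h2 \<in> H" "E h1 (P!a)" "E h2 (P!Suc a)" for a h1 h2
  proof -
    obtain Q where Q: "Q \<noteq> []" "distinct Q" "hd Q = h1" "last Q = h2" "successively E Q"
      "set Q \<subseteq> V" "set Q \<inter> set P = {}" using Hpath[OF as(2,3)] by blast
    show False by (rule ins_path[OF sg lp Q(1,2,6,7,5) as(1)]) (use Q as sg_sym[OF sg as(4)] in auto)
  qed
  have cardZ: "2 * k \<le> card Z"
  proof (rule ccontr)
    assume "\<not> 2 * k \<le> card Z"
    then have "card Z < 2*k" by simp
    moreover have "Z \<subseteq> V" using Z_def f by auto
    ultimately have con: "connected_on (V - Z) E" using kc unfolding k_connected_def by blast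
    have l2: "2 \<le> length P" using len2[OF lp uv] .
    obtain p0 where p0: "p0 \<in> set P" "p0 \<notin> Z"
    proof -
      have "P!0 \<notin> Z \<or> P!1 \<notin> Z"
      proof (rule ccontr)
        assume "\<not> (P!0 \<notin> Z \<or> P!1 \<notin> Z)"
        then obtain h1 h2 where "h1 \<in> H" "h2 \<in> H" "E h1 (P!0)" "E h2 (P!Suc 0)" unfolding Z_def by auto
        then show False using ins[of 0 h1 h2] l2 by auto
      qed
      then show ?thesis using that l2 by (metis One_nat_def Suc_1 Suc_le_lessD nth_mem order_less_le_trans zero_less_Suc)
    qed
    have xVZ: "x \<in> V - Z" using x Z_def by auto
    have p0V: "p0 \<in> V - Z" using p0 f by auto
    have "(\<lambda>a b. a \<in> V - Z \<and> b \<in> V - Z \<and> E a b)\<^sup>*\<^sup>* x p0" using con xVZ p0V unfolding connected_on_def by blast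
    then have "p0 \<in> H"
    proof (induction rule: rtranclp_induct)
      case base then show ?case by (rule xH)
    next
      case (step w w')
      have "w' \<notin> set P" using step Z_def by auto
      then have "w' \<in> W" using step W_def by auto
      then have "R w w'" using step hW unfolding R_def by auto
      then show ?case using step unfolding H_def by auto
    qed
    then show False using hW p0 W_def by auto
  qed
  have cZpos: "card Z \<le> card Zpos + 1" by (rule card_pos_bound) (auto simp: Z_def Zpos_def)
  have injZ: "inj_on (\<lambda>p. P!Suc p) Zpos" unfolding inj_on_def Zpos_def using f(2) by (simp add: nth_eq_iff_index_eq)
  have cZp: "k \<le> card Zp" unfolding Zp_def using card_image[OF injZ] cardZ cZpos k1 by linarith
  have indZ: "\<not> E (P!Suc p) (P!Suc q)" if "p \<in> Zpos" "q \<in> Zpos" for p q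
  proof
    assume e: "E (P!Suc p) (P!Suc q)"
    have main: False if pq: "p' < q'" "p' \<in> Zpos" "q' \<in> Zpos" "E (P!Suc p') (P!Suc q')" for p' q'
    proof -
      obtain h1 h2 where h: "h1 \<in> H" "h2 \<in> H" "E h1 (P!p')" "E h2 (P!q')" using pq unfolding Zpos_def Z_def by auto
      obtain Q where Q: "Q \<noteq> []" "distinct Q" "hd Q = h1" "last Q = h2" "successively E Q"
        "set Q \<subseteq> V" "set Q \<inter> set P = {}" using Hpath[OF h(1,2)] by blast
      show False by (rule cross_path[OF sg lp Q(1,2,6,7,5) pq(1)]) (use Q h pq sg_sym[OF sg h(3)] Zpos_def in auto)
    qed
    consider "p < q" | "p = q" | "q < p" by linarith
    then show False
    proof cases
      case 1 then show ?thesis using main that e by blast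
    next
      case 2 then show ?thesis using e sg unfolding simple_graph_def by auto
    next
      case 3 then show ?thesis using main[of q p] that sg_sym[OF sg e] by blast
    qed
  qed
  have naZ: "\<not> E h (P!Suc p)" if as: "h \<in> H" "p \<in> Zpos" for h p
  proof
    assume e: "E h (P!Suc p)"
    obtain h1 where "h1 \<in> H" "E h1 (P!p)" using as unfolding Zpos_def Z_def by auto
    then show False using ins[of p h1 h] as e unfolding Zpos_def by auto
  qed
  show False
  proof (rule free_use[OF fr sg xy, of Zp])
    have "finite Zpos" unfolding Zpos_def by (rule finite_subset[of _ "{..<length P}"]) auto
    then show "finite Zp" unfolding Zp_def by simp
    show "Zp \<subseteq> V" using f Zp_def Zpos_def by auto
    show "k \<le> card Zp" by (rule cZp)
    show "x \<notin> Zp" "y \<notin> Zp" using x y Zp_def Zpos_def by auto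
    show "\<forall>s\<in>Zp. \<forall>t\<in>Zp. \<not> E s t" using indZ unfolding Zp_def by auto
    show "\<forall>s\<in>Zp. \<not> E x s \<and> \<not> E y s" using naZ xH yH unfolding Zp_def by auto
  qed
qed

lemma deg_bound:
  assumes sg: "simple_graph V E" and kc: "k_connected V E (2*k)" and x: "x \<in> V"
  shows "2 * k \<le> card {y. E x y}"
proof (rule ccontr)
  define N where "N = {y. E x y}"
  assume "\<not> 2 * k \<le> card {y. E x y}"
  then have cN: "card N < 2 * k" unfolding N_def by simp
  have NV: "N \<subseteq> V" using sg unfolding simple_graph_def N_def by auto
  have fV: "finite V" using sg unfolding simple_graph_def by auto
  have con: "connected_on (V - N) E" using kc cN NV unfolding k_connected_def by blast
  have cV: "card V > 2 * k" using kc unfolding k_connected_def by simp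
  have xN: "x \<notin> N" using sg unfolding simple_graph_def N_def by auto
  have "card (V - N) \<ge> 2" using card_Diff_subset[OF finite_subset[OF NV fV] NV] cN cV by linarith
  then obtain z where z: "z \<in> V - N" "z \<noteq> x"
    by (metis One_nat_def Suc_1 card.empty card.insert card_mono ex_in_conv finite.emptyI finite.insertI insertI1 insert_absorb not_less_eq_eq subsetI)
  have "(\<lambda>a b. a \<in> V - N \<and> b \<in> V - N \<and> E a b)\<^sup>*\<^sup>* x z" using con z x xN unfolding connected_on_def by blast
  then show False
  proof (cases rule: converse_rtranclpE)
    case base then show ?thesis using z by simp
  next
    case (step w) then show ?thesis unfolding N_def by auto
  qed
qed



lemma count_lemma:
  assumes "finite M" "X \<subseteq> M" "Y \<subseteq> M" "\<forall>p\<in>X. \<forall>p'\<in>Y. \<not> p < (p'::nat)"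
  shows "card X + card Y \<le> card M + 1"
proof -
  have fX: "finite X" "finite Y" using finite_subset[OF assms(2) assms(1)] finite_subset[OF assms(3) assms(1)] by auto
  have "\<forall>z1\<in>X \<inter> Y. \<forall>z2\<in>X \<inter> Y. z1 = z2"
  proof (intro ballI)
    fix z1 z2 assume "z1 \<in> X \<inter> Y" "z2 \<in> X \<inter> Y"
    then have "\<not> z1 < z2" "\<not> z2 < z1" using assms(4) by auto
    then show "z1 = z2" by simp
  qed
  moreover have "finite (X \<inter> Y)" using fX by simp
  ultimately have "card (X \<inter> Y) \<le> Suc 0" using card_le_Suc0_iff_eq[of "X \<inter> Y"] by simp
  moreover have "card (X \<union> Y) \<le> card M" using assms by (intro card_mono) auto
  moreover have "card (X \<union> Y) + card (X \<inter> Y) = card X + card Y" using card_Un_Int[OF fX] by simp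
  ultimately show ?thesis by linarith
qed

theorem mainTheorem6:
  fixes V :: "'a set" and E :: "'a \<Rightarrow> 'a \<Rightarrow> bool" and k :: nat
    and u v x :: 'a and P :: "'a list"
  assumes "simple_graph V E"
    and "k \<ge> 1"
    and "k_connected V E (2 * k)"
    and "P2_kP1_free V E k"
    and "u \<in> V" and "v \<in> V" and "u \<noteq> v"
    and "longest_uv_path V E u v P"
    and "set P \<noteq> V"
    and "x \<in> V - set P"
  shows "\<forall>a b j. a < b \<and> b < length P \<and> E x (P ! a) \<and> E x (P ! b)
            \<and> (\<forall>c. a < c \<and> c < b \<longrightarrow> \<not> E x (P ! c))
            \<and> odd j \<and> 1 \<le> j \<and> j \<le> b - a - 1
          \<longrightarrow> (\<forall>w\<in>NP_plus E P x. \<not> E (P ! (a + j)) w)"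
proof (intro allI impI)
  note sg = assms(1) and k1 = assms(2) and kc = assms(3) and fr = assms(4) and uv = assms(7)
    and lp = assms(8) and x = assms(10)
  note f = lp_facts[OF lp]
  have irr: "\<not> E s s" for s using sg unfolding simple_graph_def by auto
  have xV: "x \<in> V" "x \<notin> set P" using x by auto
  have EV: "E s t \<Longrightarrow> s \<in> V \<and> t \<in> V" for s t using sg unfolding simple_graph_def by blast
  have NP: "{y. E x y} \<subseteq> set P"
    using no_off_nbr[OF sg lp uv fr kc k1 x] EV by blast
  define Apos where "Apos = {p. Suc p < length P \<and> E x (P!p)}"
  have Apos_alt: "Apos = {p. Suc p < length P \<and> P!p \<in> {y. E x y}}" unfolding Apos_def by simp
  have finA: "finite Apos" unfolding Apos_def by (rule finite_subset[of _ "{..<length P}"]) auto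
  have cA: "2 * k \<le> card Apos + 1"
    using deg_bound[OF sg kc xV(1)] card_pos_bound[OF NP Apos_alt] by linarith
  have injA: "inj_on (\<lambda>p. P!Suc p) Apos" unfolding inj_on_def Apos_def using f(2) by (simp add: nth_eq_iff_index_eq)
  have NPp: "NP_plus E P x = (\<lambda>p. P!Suc p) ` Apos" unfolding NP_plus_def Apos_def by auto
  have indA: "\<not> E (P!Suc p) (P!Suc q)" if "p \<in> Apos" "q \<in> Apos" for p q
  proof
    assume e: "E (P!Suc p) (P!Suc q)"
    have main: False if pq: "p' < q'" "p' \<in> Apos" "q' \<in> Apos" "E (P!Suc p') (P!Suc q')" for p' q'
      by (rule cross_path[OF sg lp, of "[x]" p' q']) (use pq xV sg_sym[OF sg, of x "P!p'"] Apos_def in auto)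
    consider "p < q" | "p = q" | "q < p" by linarith
    then show False
    proof cases
      case 1 then show ?thesis using main that e by blast
    next
      case 2 then show ?thesis using e irr by auto
    next
      case 3 then show ?thesis using main[of q p] that sg_sym[OF sg e] by blast
    qed
  qed
  have nxA: "\<not> E x (P!Suc p)" if "p \<in> Apos" for p
  proof
    assume e: "E x (P!Suc p)"
    show False by (rule ins_path[OF sg lp, of "[x]" p]) (use that e xV sg_sym[OF sg, of x "P!p"] Apos_def in auto)
  qed
  have nxA2: "\<not> E (P!Suc p) x" if "p \<in> Apos" for p
    using nxA[OF that] sg_sym[OF sg, of "P!Suc p" x] by blast
  fix a b j
  assume H: "a < b \<and> b < length P \<and> E x (P ! a) \<and> E x (P ! b)
            \<and> (\<forall>c. a < c \<and> c < b \<longrightarrow> \<not> E x (P ! c))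
            \<and> odd j \<and> 1 \<le> j \<and> j \<le> b - a - 1"
  then have ab: "a < b" "b < length P" "E x (P!a)" "E x (P!b)" "\<And>c. a < c \<Longrightarrow> c < b \<Longrightarrow> \<not> E x (P!c)"
    "odd j" "j \<le> b - a - 1" by auto
  have side: "p \<le> a \<or> b \<le> p" if "p \<in> Apos" for p
    using that ab(5)[of p] unfolding Apos_def by force
  have claim: "\<forall>p\<in>Apos. \<not> E (P!(a + (2*m+1))) (P!Suc p)" if "2*m+1 \<le> b - a - 1" for m
    using that
  proof (induction m)
    case 0
    have aA: "a \<in> Apos" using ab unfolding Apos_def by auto
    show ?case
    proof
      fix p assume p: "p \<in> Apos"
      show "\<not> E (P ! (a + (2 * 0 + 1))) (P ! Suc p)"
        using indA[OF aA p] irr by (cases "p = a") auto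
    qed
  next
    case (Suc m)
    define r where "r = 2*m+1"
    define q0 where "q0 = a + r + 1"
    have rb: "q0 + 1 < b" using Suc.prems unfolding q0_def r_def by simp
    have IH: "\<forall>p\<in>Apos. \<not> E (P!(a + r)) (P!Suc p)" using Suc r_def by simp
    have tgt: "a + (2 * Suc m + 1) = Suc q0" unfolding q0_def r_def by simp
    have intr: "\<not> E x (P!c)" if "a < c" "c < b" for c using ab(5) that .
    have e1: "E (P!(a+r)) (P!q0)" using path_edge[OF lp, of "a+r"] rb ab unfolding q0_def by simp
    have l1: "Suc q0 < length P" using rb ab by simp
    show ?case unfolding tgt
    proof (rule ballI, rule notI)
      fix p0 assume p0: "p0 \<in> Apos" and e0: "E (P ! Suc q0) (P ! Suc p0)"
      define Xp where "Xp = {p\<in>Apos. E (P!q0) (P!Suc p)}"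
      define Yp where "Yp = {p\<in>Apos. E (P!Suc q0) (P!Suc p)}"
      have imgP: "(\<lambda>p. P!Suc p) ` B \<subseteq> set P" if "B \<subseteq> Apos" for B
        using that unfolding Apos_def by auto
      have inj': "P!Suc p = P!Suc p' \<longleftrightarrow> p = p'" if "p \<in> Apos" "p' \<in> Apos" for p p'
        using injA that unfolding inj_on_def by blast
      have posP: "P!Suc p = P!i \<longleftrightarrow> Suc p = i" if "p \<in> Apos" "i < length P" for p i
        using that f(2) unfolding Apos_def by (simp add: nth_eq_iff_index_eq)
      have bX: "card (Apos - Xp) + 1 < k"
      proof (rule ccontr)
        assume "\<not> card (Apos - Xp) + 1 < k"
        define S where "S = insert x ((\<lambda>p. P!Suc p) ` (Apos - Xp))"
        have cS: "card S = card (Apos - Xp) + 1"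
        proof -
          have "x \<notin> (\<lambda>p. P!Suc p) ` (Apos - Xp)" using imgP[of "Apos - Xp"] xV by auto
          moreover have "card ((\<lambda>p. P!Suc p) ` (Apos - Xp)) = card (Apos - Xp)"
            using card_image inj_on_subset[OF injA] by blast
          ultimately show ?thesis unfolding S_def using finA by simp
        qed
        show False
        proof (rule free_use[OF fr sg e1, of S])
          show "S \<subseteq> V" "finite S" using f imgP[of "Apos - Xp"] xV finA unfolding S_def by auto
          show "k \<le> card S" using cS \<open>\<not> card (Apos - Xp) + 1 < k\<close> by linarith
          show "P ! (a + r) \<notin> S"
          proof
            assume "P ! (a + r) \<in> S"
            then obtain p where "p \<in> Apos" "p \<notin> Xp" "P!(a+r) = P!Suc p" using xV f rb ab unfolding S_def
              by (auto simp: q0_def)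
            then show False using sg_sym[OF sg e1] unfolding Xp_def by (auto simp: q0_def)
          qed
          show "P ! q0 \<notin> S"
          proof
            assume "P ! q0 \<in> S"
            then obtain p where p: "p \<in> Apos" "P!q0 = P!Suc p" using xV f rb ab unfolding S_def
              by (auto simp: q0_def)
            then have "Suc p = q0" using posP[of p q0] rb ab by simp
            then show False using p intr[of p] rb unfolding Apos_def q0_def r_def by auto
          qed
          show "\<forall>s\<in>S. \<forall>t\<in>S. \<not> E s t" unfolding S_def using indA nxA nxA2 irr by auto
          have n1: "\<not> E (P ! (a + r)) x" using intr[of "a+r"] sg_sym[OF sg, of "P!(a+r)" x] rb unfolding q0_def r_def by auto
          have n2: "\<not> E (P ! q0) x" using intr[of q0] sg_sym[OF sg, of "P!q0" x] rb unfolding q0_def r_def by auto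
          show "\<forall>s\<in>S. \<not> E (P ! (a + r)) s \<and> \<not> E (P ! q0) s"
            unfolding S_def using IH n1 n2 unfolding Xp_def by auto
        qed
      qed
      have bY: "card (Apos - Yp) + 1 < k"
      proof (rule ccontr)
        assume "\<not> card (Apos - Yp) + 1 < k"
        define S where "S = insert x ((\<lambda>p. P!Suc p) ` (Apos - Yp))"
        have cS: "card S = card (Apos - Yp) + 1"
        proof -
          have "x \<notin> (\<lambda>p. P!Suc p) ` (Apos - Yp)" using imgP[of "Apos - Yp"] xV by auto
          moreover have "card ((\<lambda>p. P!Suc p) ` (Apos - Yp)) = card (Apos - Yp)"
            using card_image inj_on_subset[OF injA] by blast
          ultimately show ?thesis unfolding S_def using finA by simp
        qed
        have p0Y: "p0 \<in> Yp" using p0 e0 unfolding Yp_def by simp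
        show False
        proof (rule free_use[OF fr sg e0, of S])
          show "S \<subseteq> V" "finite S" using f imgP[of "Apos - Yp"] xV finA unfolding S_def by auto
          show "k \<le> card S" using cS \<open>\<not> card (Apos - Yp) + 1 < k\<close> by linarith
          show "P ! Suc q0 \<notin> S"
          proof
            assume "P ! Suc q0 \<in> S"
            then obtain p where p: "p \<in> Apos" "P!Suc q0 = P!Suc p" using xV f l1 unfolding S_def
              by auto
            then have "p = q0" using posP[of p "Suc q0"] l1 by simp
            then show False using p intr[of q0] rb unfolding Apos_def q0_def by auto
          qed
          show "P ! Suc p0 \<notin> S"
          proof
            assume "P ! Suc p0 \<in> S"
            then obtain p where p: "p \<in> Apos" "p \<notin> Yp" "P!Suc p0 = P!Suc p" using xV f p0 imgP[of "{p0}"] unfolding S_def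
              by auto
            then show False using inj'[OF p(1) p0] p0Y by auto
          qed
          show "\<forall>s\<in>S. \<forall>t\<in>S. \<not> E s t" unfolding S_def using indA nxA nxA2 irr by auto
          have "\<not> E (P ! Suc q0) x" using intr[of "Suc q0"] rb sg_sym[OF sg, of "P ! Suc q0" x] unfolding q0_def by auto
          moreover have "\<not> E (P ! Suc p0) x" using nxA2[OF p0] by auto
          moreover have "\<not> E (P ! Suc q0) (P!Suc p)" if "p \<in> Apos - Yp" for p using that unfolding Yp_def by auto
          moreover have "\<not> E (P ! Suc p0) (P!Suc p)" if "p \<in> Apos - Yp" for p using that indA p0 by auto
          ultimately show "\<forall>s\<in>S. \<not> E (P ! Suc q0) s \<and> \<not> E (P ! Suc p0) s"
            unfolding S_def by auto
        qed
      qed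
      have nc: False if as: "p \<in> Xp" "p' \<in> Yp" "p < p'" "p \<le> a \<and> p' \<le> a \<or> b \<le> p \<and> b \<le> p'" for p p'
      proof -
        have pA: "p \<in> Apos" "p' \<in> Apos" "E (P!q0) (P!Suc p)" "E (P!Suc q0) (P!Suc p')"
          using as unfolding Xp_def Yp_def by auto
        consider "p \<le> a" "p' \<le> a" | "b \<le> p" "b \<le> p'" using as by blast
        then show False
        proof cases
          case 1
          show False
            by (rule left_cross[OF sg lp xV, of p p' q0]) (use 1 pA as l1 sg_sym[OF sg pA(3)] sg_sym[OF sg pA(4)] in \<open>auto simp: Apos_def q0_def\<close>)
        next
          case 2
          show False
            by (rule right_cross[OF sg lp xV, of q0 p p']) (use 2 pA as rb in \<open>auto simp: Apos_def\<close>)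
        qed
      qed
      define Lp where "Lp = {p\<in>Apos. p \<le> a}"
      define Rp where "Rp = {p\<in>Apos. b \<le> p}"
      have c1: "card (Xp \<inter> Lp) + card (Yp \<inter> Lp) \<le> card Lp + 1"
        by (rule count_lemma) (use nc finA in \<open>auto simp: Lp_def\<close>)
      have c2: "card (Xp \<inter> Rp) + card (Yp \<inter> Rp) \<le> card Rp + 1"
        by (rule count_lemma) (use nc finA in \<open>auto simp: Rp_def\<close>)
      have LR: "Apos = Lp \<union> Rp" "Lp \<inter> Rp = {}" using side ab(1) unfolding Lp_def Rp_def by auto
      have fL: "finite Lp" "finite Rp" using finA LR by auto
      have XY: "Xp \<subseteq> Apos" "Yp \<subseteq> Apos" unfolding Xp_def Yp_def by auto
      have cAp: "card Apos = card Lp + card Rp" using LR card_Un_disjoint[OF fL] by simp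
      have cX: "card Xp = card (Xp \<inter> Lp) + card (Xp \<inter> Rp)"
      proof -
        have "Xp = (Xp \<inter> Lp) \<union> (Xp \<inter> Rp)" using XY LR by auto
        then show ?thesis using card_Un_disjoint[of "Xp \<inter> Lp" "Xp \<inter> Rp"] fL LR by (metis Int_assoc Int_commute Int_empty_right finite_Int)
      qed
      have cY: "card Yp = card (Yp \<inter> Lp) + card (Yp \<inter> Rp)"
      proof -
        have "Yp = (Yp \<inter> Lp) \<union> (Yp \<inter> Rp)" using XY LR by auto
        then show ?thesis using card_Un_disjoint[of "Yp \<inter> Lp" "Yp \<inter> Rp"] fL LR by (metis Int_assoc Int_commute Int_empty_right finite_Int)
      qed
      have dX: "card (Apos - Xp) = card Apos - card Xp" using card_Diff_subset[OF finite_subset[OF XY(1) finA] XY(1)] .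
      have dY: "card (Apos - Yp) = card Apos - card Yp" using card_Diff_subset[OF finite_subset[OF XY(2) finA] XY(2)] .
      have "card Xp \<le> card Apos" "card Yp \<le> card Apos" using XY finA by (auto intro: card_mono)
      then show False using c1 c2 cAp cX cY dX dY bX bY cA by linarith
    qed
  qed
  obtain m where m: "j = 2*m+1" using ab(6) by (metis oddE)
  have "\<forall>p\<in>Apos. \<not> E (P!(a + (2*m+1))) (P!Suc p)" using claim[of m] ab m by simp
  then show "\<forall>w\<in>NP_plus E P x. \<not> E (P ! (a + j)) w" unfolding NPp m by auto
qed

end
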